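(* Let $X$ be a countable compact metric space and $\alpha$ an ordinal such that the Cantor–Bendixson derivative $X^{(\alpha+1)}$ consists of exactly one point $q$. Let $f\colon X\to X$ be an expansive homeomorphism. Then $f$ has a nontrivial homoclinic point: there exists $x\in X$, $x\neq q$, such that $f^n(x)\to q$ as $n\to+\infty$ and as $n\to-\infty$.
   Context: The Cantor–Bendixson derivatives are defined by $X^{(0)}=X$, $X^{(\beta+1)}$ = the set of non-isolated points of $X^{(\beta)}$, and $X^{(\lambda)}=\bigcap_{\beta<\lambda}X^{(\beta)}$ for limit $\lambda$. A homeomorphism $f$ of a metric space $(X,d)$ is expansive if there is $c>0$ such that for all $x\neq y$ there is $n\in\mathbb Z$ with $d(f^n(x),f^n(y))>c$. *)

theory Defs
  imports "HOL-Analysis.Analysis"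
begin

definition cb_deriv :: "'a::metric_space set \<Rightarrow> 'a set" where
  "cb_deriv Y = {x \<in> Y. x islimpt Y}"

text \<open>The family of all transfinite Cantor--Bendixson derivatives X^(beta), beta an ordinal.\<close>
inductive_set cb_iterates :: "'a::metric_space set \<Rightarrow> 'a set set" for X :: "'a set" where
  base: "X \<in> cb_iterates X"
| succ: "Y \<in> cb_iterates X \<Longrightarrow> cb_deriv Y \<in> cb_iterates X"
| lim: "F \<noteq> {} \<Longrightarrow> \<forall>Z\<in>F. Z \<in> cb_iterates X \<Longrightarrow> \<Inter>F \<in> cb_iterates X"

definition iter_int :: "('a \<Rightarrow> 'a) \<Rightarrow> ('a \<Rightarrow> 'a) \<Rightarrow> int \<Rightarrow> 'a \<Rightarrow> 'a" where
  "iter_int f g n = (if n \<ge> 0 then f ^^ nat n else g ^^ nat (- n))"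

definition expansive_on :: "'a::metric_space set \<Rightarrow> ('a \<Rightarrow> 'a) \<Rightarrow> ('a \<Rightarrow> 'a) \<Rightarrow> bool" where
  "expansive_on X f g \<longleftrightarrow> (\<exists>c>0. \<forall>x\<in>X. \<forall>y\<in>X. x \<noteq> y \<longrightarrow>
      (\<exists>n::int. dist (iter_int f g n x) (iter_int f g n y) > c))"

end

theory Submission
  imports Defs
begin

lemma limpt_image:
  fixes f :: "'a::metric_space \<Rightarrow> 'a"
  assumes "continuous_on X f" "inj_on f X" "Z \<subseteq> X" "x \<in> X" "x islimpt Z" "f ` Z \<subseteq> Z"
  shows "f x islimpt Z"
proof -
  obtain s where s: "\<forall>n. s n \<in> Z - {x}" "s \<longlonglongrightarrow> x"
    using assms(5) islimpt_sequential by blast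
  have "(f \<circ> s) \<longlonglongrightarrow> f x"
    using assms(1,3,4) s unfolding continuous_on_sequentially by blast
  moreover have "\<forall>n. (f \<circ> s) n \<in> Z - {f x}"
    using s assms(2,3,4,6) by (auto simp: inj_on_def)
  ultimately show ?thesis using islimpt_sequential by blast
qed

lemma cb_inv:
  fixes X :: "'a::metric_space set"
  assumes Z: "Z \<in> cb_iterates X" and h: "homeomorphism X X f g" and c: "compact X"
  shows "Z \<subseteq> X \<and> closed Z \<and> f ` Z \<subseteq> Z \<and> g ` Z \<subseteq> Z"
  using Z
proof induction
  case base
  then show ?case using h c compact_imp_closed unfolding homeomorphism_def by blast
next
  case (succ Y)
  have inj1: "inj_on f X" using h unfolding homeomorphism_def by (metis inj_on_def)
  have inj2: "inj_on g X" using h unfolding homeomorphism_def by (metis inj_on_def)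
  have c1: "continuous_on X f" "continuous_on X g" using h unfolding homeomorphism_def by auto
  have "cb_deriv Y = Y \<inter> {x. x islimpt Y}" unfolding cb_deriv_def by auto
  hence cl: "closed (cb_deriv Y)" using succ closed_limpts closed_Int by metis
  have "f ` cb_deriv Y \<subseteq> cb_deriv Y" "g ` cb_deriv Y \<subseteq> cb_deriv Y"
    using succ limpt_image[OF c1(1) inj1] limpt_image[OF c1(2) inj2]
    unfolding cb_deriv_def by blast+
  then show ?case using cl succ unfolding cb_deriv_def by auto
next
  case (lim F)
  have "\<Inter>F \<subseteq> X" using lim by blast
  moreover have "f ` \<Inter>F \<subseteq> \<Inter>F" using lim by blast
  moreover have "g ` \<Inter>F \<subseteq> \<Inter>F" using lim by blast
  moreover have "closed (\<Inter>F)" using lim by (auto intro!: closed_Inter)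
  ultimately show ?case by blast
qed

lemma finite_outside:
  fixes Y :: "'a::metric_space set"
  assumes "compact Y" "cb_deriv Y = {q}" "e > 0"
  shows "finite (Y - ball q e)"
proof (rule ccontr)
  assume "infinite (Y - ball q e)"
  then obtain x where x: "x \<in> Y" "x islimpt (Y - ball q e)"
    using assms(1) unfolding compact_eq_Bolzano_Weierstrass by blast
  hence "x islimpt Y" using islimpt_subset by blast
  hence "x = q" using x assms(2) unfolding cb_deriv_def by blast
  then show False using x(2) assms(3) unfolding islimpt_approachable
    by (auto simp: dist_commute)
qed

lemma inj_tendsto:
  fixes Y :: "'a::metric_space set"
  assumes "compact Y" "cb_deriv Y = {q}" "inj s" "\<forall>n. s n \<in> Y"
  shows "s \<longlonglongrightarrow> q"
  unfolding lim_sequentially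
proof (intro allI impI)
  fix r :: real assume r: "r > 0"
  have "finite (s -` (Y - ball q r))"
    using finite_outside[OF assms(1,2) r] assms(3) by (simp add: finite_vimageI)
  then obtain N where N: "\<forall>n\<in>s -` (Y - ball q r). n < N"
    using finite_nat_bounded by (metis lessThan_iff subset_eq)
  show "\<exists>no. \<forall>n\<ge>no. dist (s n) q < r"
  proof (intro exI allI impI)
    fix n assume "n \<ge> N"
    have "s n \<in> ball q r"
    proof (rule ccontr)
      assume "s n \<notin> ball q r"
      hence "n \<in> s -` (Y - ball q r)" using assms(4) by auto
      hence "n < N" using N by blast
      thus False using \<open>n \<ge> N\<close> by simp
    qed
    thus "dist (s n) q < r" by (simp add: dist_commute)
  qed
qed

theorem mainTheorem16:
  fixes X :: "'a::metric_space set" and f g :: "'a \<Rightarrow> 'a" and q :: 'a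
  assumes "countable X" and "compact X"
    and "\<exists>Y\<in>cb_iterates X. cb_deriv Y = {q}"
    and "homeomorphism X X f g"
    and "expansive_on X f g"
  shows "\<exists>x\<in>X. x \<noteq> q \<and> (\<lambda>n. (f ^^ n) x) \<longlonglongrightarrow> q \<and> (\<lambda>n. (g ^^ n) x) \<longlonglongrightarrow> q"
proof -
  obtain Y where Y: "Y \<in> cb_iterates X" "cb_deriv Y = {q}" using assms(3) by blast
  have inv: "Y \<subseteq> X" "closed Y" "f ` Y \<subseteq> Y" "g ` Y \<subseteq> Y"
    using cb_inv[OF Y(1) assms(4,2)] by auto
  have cY: "compact Y" using compact_Int_closed[OF assms(2) inv(2)] inv(1)
    by (simp add: Int_absorb1)
  have qY: "q \<in> Y" "q islimpt Y" using Y(2) unfolding cb_deriv_def by auto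
  have h: "\<forall>x\<in>X. g (f x) = x" "\<forall>x\<in>X. f (g x) = x" "continuous_on X f" "continuous_on X g"
    using assms(4) unfolding homeomorphism_def by auto
  have inj1: "inj_on f X" using h by (metis inj_on_def)
  have inj2: "inj_on g X" using h by (metis inj_on_def)
  have "f q islimpt Y" using limpt_image[OF h(3) inj1 inv(1) _ qY(2) inv(3)] qY inv(1) by auto
  hence fq: "f q = q" using Y(2) qY inv(3) unfolding cb_deriv_def by blast
  have "g q islimpt Y" using limpt_image[OF h(4) inj2 inv(1) _ qY(2) inv(4)] qY inv(1) by auto
  hence gq: "g q = q" using Y(2) qY inv(4) unfolding cb_deriv_def by blast
  have fY: "(f ^^ n) y \<in> Y" if "y \<in> Y" for n y
    using that inv(3) by (induction n) auto
  have gY: "(g ^^ n) y \<in> Y" if "y \<in> Y" for n y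
    using that inv(4) by (induction n) auto
  have fqn: "(f ^^ n) q = q" for n using fq by (induction n) auto
  have gqn: "(g ^^ n) q = q" for n using gq by (induction n) auto
  have iq: "iter_int f g n q = q" for n unfolding iter_int_def using fqn gqn by auto
  have iY: "iter_int f g n y \<in> Y" if "y \<in> Y" for n y
    unfolding iter_int_def using fY gY that by auto
  have gf: "(g ^^ n) ((f ^^ n) y) = y" if "y \<in> Y" for n y
    using that
  proof (induction n arbitrary: y)
    case (Suc n)
    have "(g ^^ Suc n) ((f ^^ Suc n) y) = (g ^^ n) (g (f ((f ^^ n) y)))"
      unfolding funpow_Suc_right[of n g] by simp
    also have "\<dots> = (g ^^ n) ((f ^^ n) y)" proof -
      have "(f ^^ n) y \<in> X" using fY Suc.prems inv(1) by blast
      thus ?thesis using h(1) by simp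
    qed
    finally show ?case using Suc by simp
  qed simp
  have fg: "(f ^^ n) ((g ^^ n) y) = y" if "y \<in> Y" for n y
    using that
  proof (induction n arbitrary: y)
    case (Suc n)
    have "(f ^^ Suc n) ((g ^^ Suc n) y) = (f ^^ n) (f (g ((g ^^ n) y)))"
      unfolding funpow_Suc_right[of n f] by simp
    also have "\<dots> = (f ^^ n) ((g ^^ n) y)" proof -
      have "(g ^^ n) y \<in> X" using gY Suc.prems inv(1) by blast
      thus ?thesis using h(2) by simp
    qed
    finally show ?case using Suc by simp
  qed simp
  obtain c where c: "c > 0" "\<forall>x\<in>X. \<forall>y\<in>X. x \<noteq> y \<longrightarrow>
      (\<exists>n::int. dist (iter_int f g n x) (iter_int f g n y) > c)"
    using assms(5) unfolding expansive_on_def by blast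
  define F where "F = Y - ball q c"
  have fF: "finite F" unfolding F_def using finite_outside[OF cY Y(2) c(1)] .
  have hitF: "\<exists>n. iter_int f g n y \<in> F" if yy: "y \<in> Y" "y \<noteq> q" for y
  proof -
    have yX: "y \<in> X" "q \<in> X" using yy qY inv(1) by auto
    obtain n where "dist (iter_int f g n y) (iter_int f g n q) > c"
      using c(2)[rule_format, OF yX yy(2)] by (elim exE)
    hence "iter_int f g n y \<notin> ball q c" using iq by (simp add: dist_commute)
    thus ?thesis using iY[OF yy(1)] unfolding F_def by blast
  qed
  define per where "per y \<longleftrightarrow> (\<exists>p>0. (f ^^ p) y = y)" for y
  have perk: "(f ^^ (p * k)) y = y" if "(f ^^ p) y = y" for p k y
  proof -
    have "((f ^^ p) ^^ k) y = y" using that by (induction k) auto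
    thus ?thesis by (simp add: funpow_mult)
  qed
  have "\<exists>y\<in>Y - {q}. \<not> per y"
  proof (rule ccontr)
    assume allp: "\<not> (\<exists>y\<in>Y - {q}. \<not> per y)"
    have sub: "Y - {q} \<subseteq> (\<Union>z\<in>F. range (\<lambda>j. (f ^^ j) z))"
    proof
      fix y assume y: "y \<in> Y - {q}"
      then obtain p where p: "p > 0" "(f ^^ p) y = y" using allp unfolding per_def by blast
      obtain n where n: "iter_int f g n y \<in> F" using hitF y by blast
      show "y \<in> (\<Union>z\<in>F. range (\<lambda>j. (f ^^ j) z))"
      proof (cases "n \<ge> 0")
        case True
        define k where "k = nat n"
        have w: "(f ^^ k) y \<in> F" using n True unfolding iter_int_def k_def by simp
        have "p * k \<ge> k" using p(1) by simp
        hence "f ^^ (p * k) = f ^^ (p * k - k) \<circ> f ^^ k"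
          using funpow_add[of "p * k - k" k f] by simp
        hence "(f ^^ (p * k - k)) ((f ^^ k) y) = (f ^^ (p * k)) y" by simp
        also have "\<dots> = y" using perk p(2) by blast
        finally have "y \<in> range (\<lambda>j. (f ^^ j) ((f ^^ k) y))" by (rule range_eqI[OF sym])
        thus ?thesis using w by (rule UN_I[rotated])
      next
        case False
        define m where "m = nat (- n)"
        have w: "(g ^^ m) y \<in> F" using n False unfolding iter_int_def m_def by simp
        have "(f ^^ m) ((g ^^ m) y) = y" using fg y by blast
        hence "y \<in> range (\<lambda>j. (f ^^ j) ((g ^^ m) y))" by (rule range_eqI[OF sym])
        thus ?thesis using w by (rule UN_I[rotated])
      qed
    qed
    have "finite (range (\<lambda>j. (f ^^ j) z))" if "z \<in> F" for z
    proof -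
      have "z \<in> Y - {q}" using that c(1) unfolding F_def by auto
      then obtain p where p: "p > 0" "(f ^^ p) z = z" using allp unfolding per_def by blast
      have "range (\<lambda>j. (f ^^ j) z) \<subseteq> (\<lambda>j. (f ^^ j) z) ` {..<p}"
      proof
        fix w assume "w \<in> range (\<lambda>j. (f ^^ j) z)"
        then obtain j where j: "w = (f ^^ j) z" by blast
        have "f ^^ j = f ^^ (j mod p + p * (j div p))" by simp
        hence "(f ^^ j) z = (f ^^ (j mod p)) ((f ^^ (p * (j div p))) z)"
          by (simp only: funpow_add o_apply)
        also have "\<dots> = (f ^^ (j mod p)) z" using perk p(2) by simp
        finally show "w \<in> (\<lambda>j. (f ^^ j) z) ` {..<p}" using j p(1) by auto
      qed
      thus ?thesis by (meson finite_imageI finite_lessThan finite_subset)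
    qed
    hence "finite (\<Union>z\<in>F. range (\<lambda>j. (f ^^ j) z))" using fF by blast
    hence "finite (Y - {q})" using sub by (rule finite_subset[rotated])
    hence "finite Y" by simp
    thus False using qY(2) islimpt_finite by blast
  qed
  then obtain y where y: "y \<in> Y" "y \<noteq> q" "\<not> per y" by blast
  have "inj (\<lambda>n. (f ^^ n) y)"
  proof (rule linorder_injI)
    fix a b :: nat assume ab: "a < b"
    show "(f ^^ a) y \<noteq> (f ^^ b) y"
    proof
      assume eq: "(f ^^ a) y = (f ^^ b) y"
      have "f ^^ b = f ^^ a \<circ> f ^^ (b - a)"
        using ab funpow_add[of a "b - a" f] by simp
      hence "(f ^^ b) y = (f ^^ a) ((f ^^ (b - a)) y)" by simp
      hence "(g ^^ a) ((f ^^ a) y) = (g ^^ a) ((f ^^ a) ((f ^^ (b - a)) y))" using eq by simp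
      hence "y = (f ^^ (b - a)) y" using gf y(1) fY by simp
      moreover have "b - a > 0" using ab by simp
      ultimately show False using y(3) unfolding per_def by (metis (no_types))
    qed
  qed
  hence t1: "(\<lambda>n. (f ^^ n) y) \<longlonglongrightarrow> q" using inj_tendsto[OF cY Y(2)] fY y(1) by blast
  have "inj (\<lambda>n. (g ^^ n) y)"
  proof (rule linorder_injI)
    fix a b :: nat assume ab: "a < b"
    show "(g ^^ a) y \<noteq> (g ^^ b) y"
    proof
      assume eq: "(g ^^ a) y = (g ^^ b) y"
      have "y = (f ^^ b) ((g ^^ b) y)" using fg y(1) by simp
      also have "\<dots> = (f ^^ b) ((g ^^ a) y)" using eq by simp
      also have "f ^^ b = f ^^ (b - a) \<circ> f ^^ a"
        using ab funpow_add[of "b - a" a f] by simp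
      hence "(f ^^ b) ((g ^^ a) y) = (f ^^ (b - a)) ((f ^^ a) ((g ^^ a) y))" by simp
      also have "\<dots> = (f ^^ (b - a)) y" using fg y(1) by simp
      finally have "y = (f ^^ (b - a)) y" .
      moreover have "b - a > 0" using ab by simp
      ultimately show False using y(3) unfolding per_def by (metis (no_types))
    qed
  qed
  hence t2: "(\<lambda>n. (g ^^ n) y) \<longlonglongrightarrow> q" using inj_tendsto[OF cY Y(2)] gY y(1) by blast
  show ?thesis using t1 t2 y inv(1) by blast
qed

end
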